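(* Let $w$ be an infinite word, and let $n'<n''$ be two consecutive lengths of palindromic prefixes of $w$ (i.e. no palindromic prefix of $w$ has length strictly between them), with corresponding prefixes $\pi'$ and $\pi''$, and write $\pi''=\pi'\omega$. Then every palindromic prefix $\pi$ of $w$ with $n'\le|\pi|\le n'+n''$ can be written $\pi=\pi'\omega^t$ for some integer $t\ge0$.
   Context: Infinite words are right-infinite; a finite word is a palindrome if it equals its reversal, the empty word being a palindrome; $|u|$ is the length of $u$. *)

theory Defs
  imports Main
begin

definition pref :: "(nat \<Rightarrow> 'a) \<Rightarrow> nat \<Rightarrow> 'a list" where
  "pref w n = map w [0..<n]"

definition palindrome :: "'a list \<Rightarrow> bool" where
  "palindrome u \<longleftrightarrow> rev u = u"

definition wpow :: "'a list \<Rightarrow> nat \<Rightarrow> 'a list" where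
  "wpow u t = concat (replicate t u)"

end

theory Submission
  imports Defs
begin

definition palw :: "(nat \<Rightarrow> 'a) \<Rightarrow> nat \<Rightarrow> bool" where
  "palw w L \<longleftrightarrow> (\<forall>i<L. w i = w (L - 1 - i))"

definition perw :: "(nat \<Rightarrow> 'a) \<Rightarrow> nat \<Rightarrow> nat \<Rightarrow> bool" where
  "perw w q L \<longleftrightarrow> (\<forall>i. i + q < L \<longrightarrow> w i = w (i + q))"

lemma palD: "palw w L \<Longrightarrow> i < L \<Longrightarrow> w i = w (L - 1 - i)"
  unfolding palw_def by blast

lemma perD: "perw w q L \<Longrightarrow> i + q < L \<Longrightarrow> w i = w (i + q)"
  unfolding perw_def by blast

lemma pal_iff: "palindrome (pref w L) \<longleftrightarrow> palw w L"
proof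
  assume "palindrome (pref w L)"
  hence h: "rev (map w [0..<L]) = map w [0..<L]" by (simp add: palindrome_def pref_def)
  show "palw w L" unfolding palw_def
  proof (intro allI impI)
    fix i assume i: "i < L"
    have "rev (map w [0..<L]) ! i = map w [0..<L] ! i" using h by simp
    thus "w i = w (L - 1 - i)" using i by (simp add: rev_nth)
  qed
next
  assume p: "palw w L"
  show "palindrome (pref w L)" unfolding palindrome_def pref_def
  proof (rule nth_equalityI)
    fix i assume "i < length (rev (map w [0..<L]))"
    hence i: "i < L" by simp
    have "w (L - 1 - i) = w i" using palD[OF p i] by simp
    thus "rev (map w [0..<L]) ! i = map w [0..<L] ! i" using i by (simp add: rev_nth)
  qed simp
qed

lemma L1: assumes "palw w L" "palw w K" "K < L" shows "perw w (L - K) L"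
  unfolding perw_def
proof (intro allI impI)
  fix i assume i: "i + (L - K) < L"
  have iK: "i < K" using i assms(3) by linarith
  have e: "L - 1 - (i + (L - K)) = K - 1 - i" using i assms(3) by auto
  have "w (i + (L - K)) = w (L - 1 - (i + (L - K)))" using palD[OF assms(1) i] .
  also have "\<dots> = w (K - 1 - i)" by (simp only: e)
  also have "\<dots> = w i" using palD[OF assms(2) iK] by simp
  finally show "w i = w (i + (L - K))" by simp
qed

lemma L2: assumes "palw w L" "perw w q L" "q \<le> L" shows "palw w (L - q)"
  unfolding palw_def
proof (intro allI impI)
  fix i assume i: "i < L - q"
  have iL: "i < L" using i by simp
  have e: "L - q - 1 - i + q = L - 1 - i" using i by auto
  have "L - q - 1 - i + q < L" using i by auto
  hence "w (L - q - 1 - i) = w (L - q - 1 - i + q)" using perD[OF assms(2)] by blast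
  also have "\<dots> = w (L - 1 - i)" by (simp only: e)
  also have "\<dots> = w i" using palD[OF assms(1) iL] by simp
  finally show "w i = w (L - q - 1 - i)" by simp
qed

lemma L3: assumes "perw w p L" "perw w q L" "p < q" "p + q \<le> L" shows "perw w (q - p) L"
  unfolding perw_def
proof (intro allI impI)
  fix i assume i: "i + (q - p) < L"
  show "w i = w (i + (q - p))"
  proof (cases "i + q < L")
    case True
    have h: "i + (q - p) + p < L" using True assms(3) by simp
    have e: "i + (q - p) + p = i + q" using assms(3) by simp
    have "w i = w (i + q)" using perD[OF assms(2) True] .
    also have "\<dots> = w (i + (q - p) + p)" by (simp only: e)
    also have "\<dots> = w (i + (q - p))" using perD[OF assms(1) h] by simp
    finally show ?thesis .
  next
    case False
    hence ip: "i \<ge> p" using assms(4) by auto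
    have h1: "i - p + p < L" using i ip assms(3) by simp
    have e1: "i - p + p = i" using ip by simp
    have h2: "i - p + q < L" using i ip assms(3) by simp
    have e2: "i - p + q = i + (q - p)" using ip assms(3) by simp
    have "w i = w (i - p + p)" by (simp only: e1)
    also have "\<dots> = w (i - p)" using perD[OF assms(1) h1] by simp
    also have "\<dots> = w (i - p + q)" using perD[OF assms(2) h2] .
    also have "\<dots> = w (i + (q - p))" by (simp only: e2)
    finally show ?thesis .
  qed
qed

lemma perw_mono: "perw w q L \<Longrightarrow> K \<le> L \<Longrightarrow> perw w q K"
  unfolding perw_def by (meson less_le_trans)

lemma perw_mult: "perw w d L \<Longrightarrow> a + c * d < L \<Longrightarrow> w a = w (a + c * d)"
proof (induction c)
  case 0 thus ?case by simp
next
  case (Suc c)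
  have e: "a + Suc c * d = a + c * d + d" by simp
  have h: "a + c * d + d < L" using Suc.prems by simp
  hence "w a = w (a + c * d)" using Suc by simp
  also have "\<dots> = w (a + c * d + d)" using perD[OF Suc.prems(1) h] .
  finally show ?case by (simp only: e)
qed

lemma wpow_Suc': "wpow u (Suc t) = wpow u t @ u"
  by (induction t) (simp_all add: wpow_def)

theorem lemma5p4:
  fixes w :: "nat \<Rightarrow> 'a" and n' n'' :: nat and \<omega> \<pi> :: "'a list"
  assumes "n' < n''"
    and "palindrome (pref w n')"
    and "palindrome (pref w n'')"
    and "\<And>m. n' < m \<Longrightarrow> m < n'' \<Longrightarrow> \<not> palindrome (pref w m)"
    and "pref w n'' = pref w n' @ \<omega>"
    and "\<pi> = pref w (length \<pi>)" and "palindrome \<pi>"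
    and "n' \<le> length \<pi>" and "length \<pi> \<le> n' + n''"
  shows "\<exists>t::nat. \<pi> = pref w n' @ wpow \<omega> t"
proof -
  define m where "m = length \<pi>"
  define d where "d = n'' - n'"
  have pi: "\<pi> = pref w m" unfolding m_def by (rule assms(6))
  have "palindrome (pref w m)" unfolding pi[symmetric] by (rule assms(7))
  hence pm: "palw w m" using pal_iff by blast
  have p1: "palw w n'" and p2: "palw w n''" using assms(2,3) pal_iff by auto
  have nop: "\<And>k. n' < k \<Longrightarrow> k < n'' \<Longrightarrow> \<not> palw w k" using assms(4) pal_iff by metis
  have om: "\<omega> = map w [n'..<n'']"
  proof -
    have "[0..<n''] = [0..<n'] @ [n'..<n'']" using assms(1)
      by (metis le_add_diff_inverse less_imp_le_nat upt_add_eq_append zero_le)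
    thus ?thesis using assms(5) by (simp add: pref_def)
  qed
  have pd: "perw w d n''" using L1[OF p2 p1 assms(1)] d_def by simp
  have d0: "d > 0" using assms(1) d_def by simp
  have minp: "q \<ge> d" if "perw w q n''" "0 < q" "q < n''" for q
  proof (rule ccontr)
    assume "\<not> q \<ge> d"
    hence "n' < n'' - q" "n'' - q < n''" using that d_def by auto
    moreover have "palw w (n'' - q)" using L2[OF p2 that(1)] that by simp
    ultimately show False using nop by blast
  qed
  have dv: "perw w p n'' \<Longrightarrow> 0 < p \<Longrightarrow> p + d \<le> n'' \<Longrightarrow> d dvd p" for p
  proof (induction p rule: less_induct)
    case (less p)
    consider "p = d" | "p < d" | "d < p" by linarith
    thus ?case
    proof cases
      case 1 thus ?thesis by simp
    next
      case 2
      have "perw w (d - p) n''" using L3[OF less.prems(1) pd 2] less.prems by simp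
      hence "d \<le> d - p" by (rule minp) (use 2 d_def assms(1) less.prems in auto)
      thus ?thesis using 2 less.prems by auto
    next
      case 3
      have pp: "perw w (p - d) n''" using L3[OF pd less.prems(1) 3] less.prems by simp
      have "d dvd (p - d)" using less.IH[OF _ pp] 3 d0 less.prems by auto
      thus ?thesis using 3 using dvd_diffD[of d p d] by simp
    qed
  qed
  have step: "pref w (n' + t * d) = pref w n' @ wpow \<omega> t"
    if per: "perw w d L" and le: "n' + t * d \<le> L" for t L
    using le
  proof (induction t)
    case 0 thus ?case by (simp add: wpow_def)
  next
    case (Suc t)
    have IH: "pref w (n' + t * d) = pref w n' @ wpow \<omega> t" using Suc by simp
    have "pref w (n' + Suc t * d) = pref w (n' + t * d) @ map w [n' + t * d..<n' + t*d + d]"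
    proof -
      have e: "n' + Suc t * d = (n' + t*d) + d" by simp
      show ?thesis unfolding pref_def e upt_add_eq_append[OF le0] map_append ..
    qed
    also have "map w [n' + t * d..<n' + t*d + d] = \<omega>"
      unfolding om
    proof (rule nth_equalityI)
      show "length (map w [n' + t * d..<n' + t * d + d]) = length (map w [n'..<n''])"
        using d_def assms(1) by simp
    next
      fix i assume "i < length (map w [n' + t * d..<n' + t * d + d])"
      hence i: "i < d" by simp
      have "w (n' + i) = w (n' + i + t * d)"
      proof (rule perw_mult[OF per])
        show "n' + i + t * d < L" using i Suc.prems by simp
      qed
      thus "map w [n' + t * d..<n' + t * d + d] ! i = map w [n'..<n''] ! i"
        using i d_def by (simp add: algebra_simps)
    qed
    finally show ?case using IH by (simp add: wpow_Suc')
  qed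
  show ?thesis
  proof (cases "m \<le> n''")
    case True
    hence "m = n' \<or> m = n''" using nop[of m] pm assms(8) m_def by linarith
    thus ?thesis
    proof
      assume "m = n'" thus ?thesis using pi by (intro exI[of _ 0]) (simp add: wpow_def)
    next
      assume "m = n''" thus ?thesis using pi assms(5) om
        by (intro exI[of _ 1]) (simp add: wpow_def)
    qed
  next
    case False
    define p where "p = m - n''"
    have ppm: "perw w p m" using L1[OF pm p2] False p_def by simp
    have fs: "p + d \<le> n''" "0 < p" "n'' \<le> m" using False p_def d_def assms(9) m_def assms(1) by auto
    hence "d dvd p" using dv[OF perw_mono[OF ppm]] by blast
    then obtain k where k: "p = d * k" by auto
    have perdm: "perw w d m" unfolding perw_def
    proof (intro allI impI)
      fix j assume j: "j + d < m"
      show "w j = w (j + d)"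
      proof (cases "j + d < n''")
        case True thus ?thesis using perD[OF pd] by blast
      next
        case F: False
        have pn: "p + d \<le> n''" using fs by simp
        hence jp: "j \<ge> p" using F by auto
        have "j - p + p < m" using jp j by simp
        hence "w (j - p) = w (j - p + p)" using ppm unfolding perw_def by blast
        hence a: "w (j - p) = w j" using jp by simp
        have "j + d - p + p < m" using jp j by simp
        hence "w (j + d - p) = w (j + d - p + p)" using ppm unfolding perw_def by blast
        hence b: "w (j + d - p) = w (j + d)" using jp by simp
        have "j - p + d < n''" using j jp p_def fs by simp
        hence "w (j - p) = w (j - p + d)" using pd unfolding perw_def by blast
        moreover have "j - p + d = j + d - p" using jp by simp
        ultimately show ?thesis using a b by simp
      qed
    qed
    have m1: "m = n'' + p" using fs p_def by simp
    have m2: "n'' = n' + d" using d_def assms(1) by simp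
    have mm: "n' + (k + 1) * d = m" unfolding m1 m2 k by (simp add: mult.commute)
    have "pref w (n' + (k + 1) * d) = pref w n' @ wpow \<omega> (k + 1)"
      by (rule step[OF perdm]) (rule eq_imp_le[OF mm])
    hence "\<pi> = pref w n' @ wpow \<omega> (k + 1)" using pi mm by simp
    thus ?thesis by blast
  qed
qed

end
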